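(* Let $G=(V,E)$ be a finite directed graph and let there be $k$ players; player $i\in\{1,\dots,k\}$ has a source–sink pair $(s_i,t_i)$ of vertices of $G$ and a flow amount $r_i>0$, and must route all of $r_i$ along a single $s_i$–$t_i$ path chosen from the set $\Pi_i$ of $s_i$–$t_i$ paths in $G$ (non-splittable, atomic routing). A feasible flow $f$ is a choice of one path $P_i\in\Pi_i$ for each player $i$; for an edge $e$, $f_e=\sum_{i: e\in P_i} r_i$ denotes the total flow on $e$. Each edge $e$ has a congestion function $c_e:\mathbb{R}^+\to\mathbb{R}^+$ which is affine, $c_e(x)=a_e x+b_e$, and a unit-price function $u_e:\mathbb{R}^+\to\mathbb{R}^+$. The cost to player $i$ of a path $P$ under flow $f$ is $t^i_P(f)=\sum_{e\in P}\bigl(c_e(f_e)+u_e(r_i)\bigr)$. Call $f$ an equilibrium flow if for every player $i$ and every pair $P,\tilde P\in\Pi_i$ with $P$ the path used by $i$ in $f$, one has $t^i_P(f)\le t^i_{\tilde P}(\tilde f)$, where $\tilde f$ is the flow identical to $f$ except that player $i$ routes its $r_i$ units along $\tilde P$ instead of $P$. Then at least one equilibrium flow exists.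
   Context: The per-unit price $u_e(r_i)$ is interpreted as $F_e(r_i)/r_i$, where $F_e(r_i)$ is the amount charged by the Internet service provider owning edge $e$ for routing $r_i$ units of player $i$'s flow; it depends only on player $i$'s own flow amount, while the congestion term $c_e$ depends on the total flow $f_e$ on the edge. *)

theory Defs
  imports "HOL-Analysis.Analysis"
begin

definition path_edges :: "'v list \<Rightarrow> ('v \<times> 'v) set" where
  "path_edges p = set (zip p (tl p))"

definition st_paths :: "'v set \<Rightarrow> ('v \<times> 'v) set \<Rightarrow> 'v \<Rightarrow> 'v \<Rightarrow> 'v list set" where
  "st_paths V E s t = {p. p \<noteq> [] \<and> hd p = s \<and> last p = t \<and> distinct p
      \<and> set p \<subseteq> V \<and> path_edges p \<subseteq> E}"

definition feasible ::
  "'v set \<Rightarrow> ('v \<times> 'v) set \<Rightarrow> nat \<Rightarrow> (nat \<Rightarrow> 'v) \<Rightarrow> (nat \<Rightarrow> 'v) \<Rightarrow> (nat \<Rightarrow> 'v list) \<Rightarrow> bool" where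
  "feasible V E k s t P = (\<forall>i\<in>{1..k}. P i \<in> st_paths V E (s i) (t i))"

definition edge_flow ::
  "nat \<Rightarrow> (nat \<Rightarrow> real) \<Rightarrow> (nat \<Rightarrow> 'v list) \<Rightarrow> ('v \<times> 'v) \<Rightarrow> real" where
  "edge_flow k r P e = (\<Sum>i\<in>{i\<in>{1..k}. e \<in> path_edges (P i)}. r i)"

definition path_cost ::
  "nat \<Rightarrow> (nat \<Rightarrow> real) \<Rightarrow> (('v \<times> 'v) \<Rightarrow> real) \<Rightarrow> (('v \<times> 'v) \<Rightarrow> real)
   \<Rightarrow> (('v \<times> 'v) \<Rightarrow> real \<Rightarrow> real) \<Rightarrow> nat \<Rightarrow> 'v list \<Rightarrow> (nat \<Rightarrow> 'v list) \<Rightarrow> real" where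
  "path_cost k r a b u i Q P =
     (\<Sum>e\<in>path_edges Q. (a e * edge_flow k r P e + b e) + u e (r i))"

definition equilibrium ::
  "'v set \<Rightarrow> ('v \<times> 'v) set \<Rightarrow> nat \<Rightarrow> (nat \<Rightarrow> 'v) \<Rightarrow> (nat \<Rightarrow> 'v) \<Rightarrow> (nat \<Rightarrow> real)
   \<Rightarrow> (('v \<times> 'v) \<Rightarrow> real) \<Rightarrow> (('v \<times> 'v) \<Rightarrow> real) \<Rightarrow> (('v \<times> 'v) \<Rightarrow> real \<Rightarrow> real)
   \<Rightarrow> (nat \<Rightarrow> 'v list) \<Rightarrow> bool" where
  "equilibrium V E k s t r a b u P =
     (feasible V E k s t P \<and>
      (\<forall>i\<in>{1..k}. \<forall>Q\<in>st_paths V E (s i) (t i).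
          path_cost k r a b u i (P i) P \<le> path_cost k r a b u i Q (P(i := Q))))"

end

theory Submission
  imports Defs
begin

lemma upd_sum:
  assumes "i \<in> {1..k}"
  shows "(\<Sum>j\<in>{j\<in>{1..k}. e \<in> path_edges ((P(i:=Q)) j)}. (w::nat\<Rightarrow>real) j) =
     (\<Sum>j\<in>{j\<in>{1..k}. e \<in> path_edges (P j)}. w j)
     - (if e \<in> path_edges (P i) then w i else 0) + (if e \<in> path_edges Q then w i else 0)"
proof -
  have fin: "finite {1..k}" by simp
  have A: "(\<Sum>j\<in>{j\<in>{1..k}. e \<in> path_edges ((P(i:=Q)) j)}. w j)
     = (\<Sum>j\<in>{1..k}. if e \<in> path_edges ((P(i:=Q)) j) then w j else 0)"
    by (rule sum.inter_filter[OF fin])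
  have B: "(\<Sum>j\<in>{j\<in>{1..k}. e \<in> path_edges (P j)}. w j)
     = (\<Sum>j\<in>{1..k}. if e \<in> path_edges (P j) then w j else 0)"
    by (rule sum.inter_filter[OF fin])
  have C: "(\<Sum>j\<in>{1..k}. if e \<in> path_edges ((P(i:=Q)) j) then w j else 0)
     = (if e \<in> path_edges Q then w i else 0) + (\<Sum>j\<in>{1..k}-{i}. if e \<in> path_edges (P j) then w j else 0)"
  proof -
    have "(\<Sum>j\<in>{1..k}-{i}. if e \<in> path_edges ((P(i:=Q)) j) then w j else 0) = (\<Sum>j\<in>{1..k}-{i}. if e \<in> path_edges (P j) then w j else 0)"
      by (rule sum.cong) auto
    thus ?thesis using sum.remove[OF fin assms, of "\<lambda>j. if e \<in> path_edges ((P(i:=Q)) j) then w j else 0"] by simp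
  qed
  have D: "(\<Sum>j\<in>{1..k}. if e \<in> path_edges (P j) then w j else 0)
     = (if e \<in> path_edges (P i) then w i else 0) + (\<Sum>j\<in>{1..k}-{i}. if e \<in> path_edges (P j) then w j else 0)"
    by (rule sum.remove[OF fin assms])
  show ?thesis using A B C D by simp
qed

lemma upd_sum2:
  assumes "i \<in> {1..k}"
  shows "(\<Sum>j\<in>{1..k}. (g::nat\<Rightarrow>'a list\<Rightarrow>real) j ((P(i:=Q)) j)) =
     (\<Sum>j\<in>{1..k}. g j (P j)) - g i (P i) + g i Q"
proof -
  have fin: "finite {1..k}" by simp
  have "(\<Sum>j\<in>{1..k}. g j ((P(i:=Q)) j)) = g i Q + (\<Sum>j\<in>{1..k}-{i}. g j (P j))"
  proof -
    have "(\<Sum>j\<in>{1..k}-{i}. g j ((P(i:=Q)) j)) = (\<Sum>j\<in>{1..k}-{i}. g j (P j))"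
      by (rule sum.cong) auto
    thus ?thesis using sum.remove[OF fin assms, of "\<lambda>j. g j ((P(i:=Q)) j)"] by simp
  qed
  moreover have "(\<Sum>j\<in>{1..k}. g j (P j)) = g i (P i) + (\<Sum>j\<in>{1..k}-{i}. g j (P j))"
    using sum.remove[OF fin assms] by simp
  ultimately show ?thesis by simp
qed

lemma sum_restr:
  assumes "finite E" "A \<subseteq> E"
  shows "sum g A = (\<Sum>e\<in>E. if e \<in> A then g e else (0::real))"
proof -
  have "sum g (E \<inter> A) = (\<Sum>e\<in>E. if e \<in> A then g e else 0)"
    by (rule sum.inter_restrict[OF assms(1)])
  moreover have "E \<inter> A = A" using assms(2) by blast
  ultimately show ?thesis by simp
qed

theorem theorem1:
  fixes V :: "'v set" and E :: "('v \<times> 'v) set" and k :: nat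
    and s t :: "nat \<Rightarrow> 'v" and r :: "nat \<Rightarrow> real"
    and a b :: "('v \<times> 'v) \<Rightarrow> real" and u :: "('v \<times> 'v) \<Rightarrow> real \<Rightarrow> real"
  assumes "finite V" and "E \<subseteq> V \<times> V"
    and "\<forall>i\<in>{1..k}. s i \<in> V \<and> t i \<in> V"
    and "\<forall>i\<in>{1..k}. r i > 0"
    and "\<forall>i\<in>{1..k}. st_paths V E (s i) (t i) \<noteq> {}"
    and "\<forall>e\<in>E. \<forall>x>0. a e * x + b e > 0"
    and "\<forall>e\<in>E. \<forall>x>0. u e x > 0"
  shows "\<exists>P. equilibrium V E k s t r a b u P"
proof -
  have finE: "finite E" using assms(1,2) finite_subset by (metis finite_SigmaI)
  define SP where "SP i = st_paths V E (s i) (t i)" for i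
  have finSP: "finite (SP i)" for i
  proof -
    have "SP i \<subseteq> {xs. set xs \<subseteq> V \<and> distinct xs}" unfolding SP_def st_paths_def by auto
    thus ?thesis using finite_subset_distinct[OF assms(1)] finite_subset by blast
  qed
  define S where "S = Pi\<^sub>E {1..k} SP"
  have finS: "finite S" unfolding S_def by (rule finite_PiE) (auto simp: finSP)
  have neS: "S \<noteq> {}" unfolding S_def PiE_eq_empty_iff SP_def using assms(5) by blast
  define ef where "ef P e = (\<Sum>j\<in>{j\<in>{1..k}. e \<in> path_edges (P j)}. r j)" for P :: "nat \<Rightarrow> 'v list" and e
  define sq where "sq P e = (\<Sum>j\<in>{j\<in>{1..k}. e \<in> path_edges (P j)}. r j ^ 2)" for P :: "nat \<Rightarrow> 'v list" and e
  define U where "U j p = r j * (\<Sum>e\<in>path_edges p. u e (r j))" for j and p :: "'v list"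
  define \<Phi> where "\<Phi> P = (\<Sum>e\<in>E. a e * (ef P e ^ 2 + sq P e) / 2 + b e * ef P e)
        + (\<Sum>j\<in>{1..k}. U j (P j))" for P
  define m where "m = Min (\<Phi> ` S)"
  have "m \<in> \<Phi> ` S" unfolding m_def using finS neS by simp
  then obtain P where PS: "P \<in> S" and Pm: "\<Phi> P = m" by auto
  have Pmin: "\<Phi> P \<le> \<Phi> P'" if "P' \<in> S" for P'
    using Pm that finS unfolding m_def by simp
  have pe_fin: "finite (path_edges p)" for p :: "'v list" unfolding path_edges_def by simp
  have key: "\<Phi> (P(i:=Q)) - \<Phi> P = r i * (path_cost k r a b u i Q (P(i:=Q)) - path_cost k r a b u i (P i) P)"
    if i: "i \<in> {1..k}" and Q: "Q \<in> SP i" for i Q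
  proof -
    let ?P' = "P(i:=Q)"
    have PiE: "path_edges (P i) \<subseteq> E" using PS i unfolding S_def SP_def st_paths_def by auto
    have QE: "path_edges Q \<subseteq> E" using Q unfolding SP_def st_paths_def by auto
    have efu: "ef ?P' e = ef P e - (if e \<in> path_edges (P i) then r i else 0) + (if e \<in> path_edges Q then r i else 0)" for e
      unfolding ef_def by (rule upd_sum[OF i])
    have squ: "sq ?P' e = sq P e - (if e \<in> path_edges (P i) then r i ^ 2 else 0) + (if e \<in> path_edges Q then r i ^ 2 else 0)" for e
      unfolding sq_def by (rule upd_sum[OF i])
    have edge: "(a e * (ef ?P' e ^ 2 + sq ?P' e) / 2 + b e * ef ?P' e) - (a e * (ef P e ^ 2 + sq P e) / 2 + b e * ef P e)
       = r i * ((if e \<in> path_edges Q then a e * ef ?P' e + b e else 0) - (if e \<in> path_edges (P i) then a e * ef P e + b e else 0))" for e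
      unfolding efu squ by (cases "e \<in> path_edges (P i)"; cases "e \<in> path_edges Q") (simp_all add: field_simps power2_eq_square)
    have Usum: "(\<Sum>j\<in>{1..k}. U j (?P' j)) = (\<Sum>j\<in>{1..k}. U j (P j)) - U i (P i) + U i Q"
      by (rule upd_sum2[OF i])
    have s1: "(\<Sum>e\<in>path_edges Q. a e * ef ?P' e + b e) = (\<Sum>e\<in>E. if e \<in> path_edges Q then a e * ef ?P' e + b e else 0)"
      by (rule sum_restr[OF finE QE])
    have s2: "(\<Sum>e\<in>path_edges (P i). a e * ef P e + b e) = (\<Sum>e\<in>E. if e \<in> path_edges (P i) then a e * ef P e + b e else 0)"
      by (rule sum_restr[OF finE PiE])
    have "(\<Sum>e\<in>E. a e * (ef ?P' e ^ 2 + sq ?P' e) / 2 + b e * ef ?P' e) - (\<Sum>e\<in>E. a e * (ef P e ^ 2 + sq P e) / 2 + b e * ef P e)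
       = (\<Sum>e\<in>E. r i * ((if e \<in> path_edges Q then a e * ef ?P' e + b e else 0) - (if e \<in> path_edges (P i) then a e * ef P e + b e else 0)))"
      by (simp add: sum_subtractf[symmetric] edge)
    also have "\<dots> = r i * ((\<Sum>e\<in>path_edges Q. a e * ef ?P' e + b e) - (\<Sum>e\<in>path_edges (P i). a e * ef P e + b e))"
      by (simp add: s1 s2 sum_distrib_left[symmetric] sum_subtractf)
    finally have F: "(\<Sum>e\<in>E. a e * (ef ?P' e ^ 2 + sq ?P' e) / 2 + b e * ef ?P' e) - (\<Sum>e\<in>E. a e * (ef P e ^ 2 + sq P e) / 2 + b e * ef P e)
       = r i * ((\<Sum>e\<in>path_edges Q. a e * ef ?P' e + b e) - (\<Sum>e\<in>path_edges (P i). a e * ef P e + b e))" .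
    have pc: "path_cost k r a b u i p PP = (\<Sum>e\<in>path_edges p. a e * ef PP e + b e) + (\<Sum>e\<in>path_edges p. u e (r i))" for p PP
      unfolding path_cost_def edge_flow_def ef_def by (simp add: sum.distrib)
    show ?thesis unfolding \<Phi>_def using F Usum by (simp add: pc U_def algebra_simps)
  qed
  have "equilibrium V E k s t r a b u P"
    unfolding equilibrium_def
  proof (intro conjI ballI)
    show "feasible V E k s t P" using PS unfolding feasible_def S_def SP_def by auto
  next
    fix i Q assume i: "i \<in> {1..k}" and Q: "Q \<in> st_paths V E (s i) (t i)"
    have "P(i:=Q) \<in> S" using PS i Q unfolding S_def SP_def by (auto simp: PiE_iff extensional_def)
    hence "0 \<le> \<Phi> (P(i:=Q)) - \<Phi> P" using Pmin by simp
    hence "0 \<le> r i * (path_cost k r a b u i Q (P(i:=Q)) - path_cost k r a b u i (P i) P)"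
      using key[OF i] Q unfolding SP_def by simp
    moreover have "r i > 0" using assms(4) i by blast
    ultimately show "path_cost k r a b u i (P i) P \<le> path_cost k r a b u i Q (P(i:=Q))"
      by (simp add: zero_le_mult_iff)
  qed
  thus ?thesis by blast
qed

end
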